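(* Fix real constants $u,v$ with $0<u<v<1$, and let $n\ge 1$ be an integer. Let $\beta>1$ be real and let $f(x)\in\mathbb Z[x]$ be a monic polynomial of degree $2n+2$ such that $f(\beta)=0$, $f(0)=1$, $$ \beta> \max\left\{ \frac 2u, \frac 1{1-v} \right\}, $$ and $$ \frac{f(x)}{(x-\beta)(x-1/\beta)} = x^{2n}+1+\sum_{i=1}^{2n-1}g_i x^i $$ for real numbers $g_i$ satisfying $u<g_i<v$ for $i=1,\dots,2n-1$. Then $f(x)$ is self-reciprocal (i.e. $x^{2n+2}f(1/x)=f(x)$) and $d_{\beta}(1)$ is $(1,2n+1)$-periodic.
   Context: For a real $\beta>1$, the beta transformation is $T_\beta(x)=\beta x-\lfloor \beta x\rfloor$ on $[0,1)$; for $x\in[0,1)$ put $x_n=\lfloor \beta T_\beta^{n-1}(x)\rfloor$ and $d_\beta(x)=x_1x_2x_3\cdots$. The expansion of one is $d_\beta(1):=\lim_{\epsilon\downarrow 0} d_\beta(1-\epsilon)$ (limit in the product topology). An infinite word $x_1x_2\cdots$ is eventually periodic if it can be written $x_1\cdots x_m(x_{m+1}\cdots x_{m+p})^\infty$ with $m\ge 0$, $p\ge 1$; choosing $m$ and $p$ minimal, the word is called $(m,p)$-periodic. *)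

theory Defs
  imports "HOL-Analysis.Analysis" "HOL-Computational_Algebra.Polynomial"
begin

definition beta_T :: "real \<Rightarrow> real \<Rightarrow> real" where
  "beta_T \<beta> x = \<beta> * x - of_int \<lfloor>\<beta> * x\<rfloor>"

text \<open>Digit sequence, 0-indexed: beta_digits b x k is x_(k+1) = floor(b * T^k x).\<close>
definition beta_digits :: "real \<Rightarrow> real \<Rightarrow> nat \<Rightarrow> int" where
  "beta_digits \<beta> x k = \<lfloor>\<beta> * ((beta_T \<beta> ^^ k) x)\<rfloor>"

text \<open>Expansion of one: limit as eps tends to 0 from the right of the digit sequence
  of 1 - eps in the product topology on sequences of integers, i.e. coordinatewise
  limits in the discrete space of integers.\<close>
definition beta_one :: "real \<Rightarrow> nat \<Rightarrow> int" where
  "beta_one \<beta> k = Lim (at_right 0) (\<lambda>\<epsilon>. beta_digits \<beta> (1 - \<epsilon>) k)"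

definition periodic_from :: "(nat \<Rightarrow> 'a) \<Rightarrow> nat \<Rightarrow> nat \<Rightarrow> bool" where
  "periodic_from w m p \<longleftrightarrow> p \<ge> 1 \<and> (\<forall>k\<ge>m. w (k + p) = w k)"

definition mp_periodic :: "(nat \<Rightarrow> 'a) \<Rightarrow> nat \<Rightarrow> nat \<Rightarrow> bool" where
  "mp_periodic w m p \<longleftrightarrow> periodic_from w m p
     \<and> (\<forall>m' p'. periodic_from w m' p' \<longrightarrow> m \<le> m')
     \<and> (\<forall>p'. periodic_from w m p' \<longrightarrow> p \<le> p')"

end

theory Submission
  imports Defs
begin

lemma floor_decomp:
  fixes x y :: real
  assumes "x = of_int m + y" "0 \<le> y" "y < 1"
  shows "\<lfloor>x\<rfloor> = m"
  using assms by (simp add: floor_eq_iff)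

lemma r_Suc:
  "(beta_T b ^^ Suc k) x = b * (beta_T b ^^ k) x - of_int \<lfloor>b * (beta_T b ^^ k) x\<rfloor>"
  by (simp add: beta_T_def)

lemma r_range: "0 \<le> (beta_T b ^^ Suc k) x \<and> (beta_T b ^^ Suc k) x < 1"
  unfolding r_Suc by linarith

lemma orbit_pert:
  fixes b \<epsilon> :: real
  assumes "b > 0" "\<epsilon> > 0" "\<forall>j\<in>{1..K}. b^j * \<epsilon> \<le> (beta_T b ^^ j) 1"
  shows "k \<le> K \<Longrightarrow> (beta_T b ^^ k) (1 - \<epsilon>) = (beta_T b ^^ k) 1 - b^k * \<epsilon>"
proof (induction k)
  case 0 then show ?case by simp
next
  case (Suc k)
  define r where "r = (\<lambda>k. (beta_T b ^^ k) 1)"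
  have IH: "(beta_T b ^^ k) (1 - \<epsilon>) = r k - b^k*\<epsilon>" using Suc by (simp add: r_def)
  have rS: "r (Suc k) = b * r k - of_int \<lfloor>b * r k\<rfloor>" unfolding r_def by (rule r_Suc)
  have "Suc k \<in> {1..K}" using Suc.prems by simp
  from bspec[OF assms(3) this] have lo: "b^(Suc k) * \<epsilon> \<le> r (Suc k)" unfolding r_def .
  have hi: "r (Suc k) < 1" using r_range unfolding r_def by blast
  have eq: "b * (r k - b^k*\<epsilon>) = of_int \<lfloor>b * r k\<rfloor> + (r (Suc k) - b^(Suc k)*\<epsilon>)"
    using rS by (simp add: algebra_simps)
  have pos: "b^(Suc k)*\<epsilon> > 0" using assms by simp
  have fl: "\<lfloor>b * (r k - b^k*\<epsilon>)\<rfloor> = \<lfloor>b * r k\<rfloor>"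
    by (rule floor_decomp[OF eq]) (use lo hi pos in auto)
  have A: "(beta_T b ^^ Suc k) (1 - \<epsilon>) = b * (r k - b^k*\<epsilon>) - of_int \<lfloor>b * (r k - b^k*\<epsilon>)\<rfloor>"
    by (simp only: r_Suc IH)
  have "(beta_T b ^^ Suc k) (1 - \<epsilon>) = r (Suc k) - b^Suc k * \<epsilon>"
    unfolding A fl using eq by linarith
  then show ?case unfolding r_def .
qed

lemma digit_pert:
  fixes b \<epsilon> :: real
  assumes "b > 0" "\<epsilon> > 0" "\<forall>j\<in>{1..Suc k}. b^j * \<epsilon> \<le> (beta_T b ^^ j) 1"
  shows "beta_digits b (1 - \<epsilon>) k = \<lfloor>b * (beta_T b ^^ k) 1\<rfloor>"
proof -
  define r where "r = (\<lambda>k. (beta_T b ^^ k) 1)"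
  have o: "(beta_T b ^^ k) (1 - \<epsilon>) = r k - b^k * \<epsilon>"
    using orbit_pert[OF assms, of k] unfolding r_def by simp
  have rS: "r (Suc k) = b * r k - of_int \<lfloor>b * r k\<rfloor>" unfolding r_def by (rule r_Suc)
  have "Suc k \<in> {1..Suc k}" by simp
  from bspec[OF assms(3) this] have lo: "b^(Suc k) * \<epsilon> \<le> r (Suc k)" unfolding r_def .
  have hi: "r (Suc k) < 1" using r_range unfolding r_def by blast
  have eq: "b * (r k - b^k*\<epsilon>) = of_int \<lfloor>b * r k\<rfloor> + (r (Suc k) - b^(Suc k)*\<epsilon>)"
    using rS by (simp add: algebra_simps)
  have pos: "b^(Suc k)*\<epsilon> > 0" using assms by simp
  have fl: "\<lfloor>b * (r k - b^k*\<epsilon>)\<rfloor> = \<lfloor>b * r k\<rfloor>"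
    by (rule floor_decomp[OF eq]) (use lo hi pos in auto)
  show ?thesis unfolding beta_digits_def o using fl unfolding r_def .
qed

lemma beta_one_eq:
  fixes b :: real
  assumes "b > 0" "\<forall>j\<ge>1. (beta_T b ^^ j) 1 > 0"
  shows "beta_one b k = \<lfloor>b * (beta_T b ^^ k) 1\<rfloor>"
proof -
  define r where "r = (\<lambda>k. (beta_T b ^^ k) 1)"
  define \<delta> where "\<delta> = Min ((\<lambda>j. r j / b^j) ` {1..Suc k})"
  have "\<delta> \<in> (\<lambda>j. r j / b^j) ` {1..Suc k}" unfolding \<delta>_def by (intro Min_in) auto
  then have dpos: "\<delta> > 0" using assms unfolding r_def by auto
  have ev: "eventually (\<lambda>\<epsilon>. \<epsilon> \<in> {0<..<\<delta>}) (at_right 0)"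
    using eventually_at_right_real[OF dpos] .
  have "eventually (\<lambda>\<epsilon>. beta_digits b (1 - \<epsilon>) k = \<lfloor>b * r k\<rfloor>) (at_right 0)"
  proof (rule eventually_mono[OF ev])
    fix \<epsilon> assume e: "\<epsilon> \<in> {(0::real)<..<\<delta>}"
    have "\<forall>j\<in>{1..Suc k}. b^j * \<epsilon> \<le> r j"
    proof
      fix j assume j: "j \<in> {1..Suc k}"
      have "\<delta> \<le> r j / b^j" unfolding \<delta>_def using j by (intro Min_le) auto
      then have "\<epsilon> \<le> r j / b^j" using e by simp
      then show "b^j * \<epsilon> \<le> r j" using assms(1) by (simp add: field_simps)
    qed
    then show "beta_digits b (1 - \<epsilon>) k = \<lfloor>b * r k\<rfloor>"
      using digit_pert[OF assms(1), of \<epsilon> k] e unfolding r_def by simp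
  qed
  then have "((\<lambda>\<epsilon>. beta_digits b (1 - \<epsilon>) k) \<longlongrightarrow> \<lfloor>b * r k\<rfloor>) (at_right 0)"
    by (rule tendsto_eventually)
  then show ?thesis unfolding beta_one_def r_def by (intro tendsto_Lim) auto
qed


lemma int_small: "(of_int m::real) = x \<Longrightarrow> \<bar>x\<bar> < 1 \<Longrightarrow> x = 0"
  by auto

lemma prod_quad:
  fixes b :: real assumes "b \<noteq> 0"
  shows "[:-b, 1:] * [:-1/b, 1:] = [:1, -(b + 1/b), 1:]"
  using assms by (simp add: field_simps)

lemma coeff_quad:
  fixes s :: real
  shows "coeff ([:1, -s, 1:] * H) (Suc (Suc j)) = coeff H j - s * coeff H (Suc j) + coeff H (Suc (Suc j))"
    "coeff ([:1, -s, 1:] * H) (Suc 0) = - s * coeff H 0 + coeff H 1"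
    "coeff ([:1, -s, 1:] * H) 0 = coeff H 0"
  by (simp_all add: algebra_simps)

lemma coeffH:
  fixes g :: "nat \<Rightarrow> real"
  shows "coeff (monom 1 N + 1 + (\<Sum>i = 1..N - 1. monom (g i) i)) j =
     (if j = N then 1 else 0) + (if j = 0 then 1 else 0) + (if j \<in> {1..N-1} then g j else 0)"
  by (simp add: coeff_sum coeff_monom)

lemma same_digits:
  fixes b x y :: real
  assumes "b > 1"
    and "\<forall>k. 0 \<le> (beta_T b ^^ k) x \<and> (beta_T b ^^ k) x \<le> 1"
    and "\<forall>k. 0 \<le> (beta_T b ^^ k) y \<and> (beta_T b ^^ k) y \<le> 1"
    and "\<forall>k. \<lfloor>b * (beta_T b ^^ k) x\<rfloor> = \<lfloor>b * (beta_T b ^^ k) y\<rfloor>"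
  shows "x = y"
proof (rule ccontr)
  assume ne: "x \<noteq> y"
  have d: "(beta_T b ^^ k) x - (beta_T b ^^ k) y = b^k * (x - y)" for k
  proof (induction k)
    case 0 then show ?case by simp
  next
    case (Suc k)
    have "(beta_T b ^^ Suc k) x - (beta_T b ^^ Suc k) y = b * ((beta_T b ^^ k) x - (beta_T b ^^ k) y)"
      unfolding r_Suc using assms(4) by (simp add: algebra_simps)
    then show ?case using Suc by simp
  qed
  have pos: "\<bar>x - y\<bar> > 0" using ne by simp
  obtain k where k: "1 / \<bar>x - y\<bar> < b^k" using real_arch_pow[OF assms(1)] by blast
  have "\<bar>b^k * (x - y)\<bar> \<le> 1" using d[of k] assms(2,3) by (smt (verit))
  then have "b^k * \<bar>x - y\<bar> \<le> 1" using assms(1) by (simp add: abs_mult)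
  moreover have "1 < b^k * \<bar>x - y\<bar>" using k pos by (simp add: field_simps)
  ultimately show False by simp
qed


theorem lemma1:
  fixes u v \<beta> :: real and n :: nat and f :: "int poly" and g :: "nat \<Rightarrow> real"
  assumes "0 < u" "u < v" "v < 1" "n \<ge> 1"
    and "\<beta> > 1"
    and "lead_coeff f = 1" "degree f = 2 * n + 2"
    and "poly (map_poly of_int f) \<beta> = 0" "poly f 0 = 1"
    and "\<beta> > max (2 / u) (1 / (1 - v))"
    and "map_poly of_int f = [:-\<beta>, 1:] * [:-1/\<beta>, 1:] *
           (monom 1 (2 * n) + 1 + (\<Sum>i = 1..2 * n - 1. monom (g i) i))"
    and "\<forall>i\<in>{1..2 * n - 1}. u < g i \<and> g i < v"
  shows "reflect_poly f = f \<and> mp_periodic (beta_one \<beta>) 1 (2 * n + 1)"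
proof -
  define N where "N = 2 * n"
  have N2: "N \<ge> 2" using assms(4) unfolding N_def by simp
  define H where "H = monom 1 N + 1 + (\<Sum>i = 1..N - 1. monom (g i) i)"
  define G where "G = coeff H"
  define s where "s = \<beta> + 1/\<beta>"
  have bpos: "\<beta> > 0" using assms(5) by simp
  have P: "map_poly of_int f = [:1, -s, 1:] * H"
  proof -
    have bne: "\<beta> \<noteq> 0" using bpos by simp
    show ?thesis unfolding assms(11) prod_quad[OF bne] H_def N_def s_def by (rule refl)
  qed
  have c: "real_of_int (coeff f j) = coeff ([:1, -s, 1:] * H) j" for j
    using P coeff_map_poly[of "of_int :: int \<Rightarrow> real" f j] by simp
  have cSS: "real_of_int (coeff f (Suc (Suc j))) = G j - s * G (Suc j) + G (Suc (Suc j))" for j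
    unfolding c coeff_quad G_def ..
  have c1: "real_of_int (coeff f (Suc 0)) = - s * G 0 + G 1"
    unfolding c coeff_quad G_def ..
  have c0: "real_of_int (coeff f 0) = G 0"
    unfolding c coeff_quad G_def ..
  have Gf: "G j = (if j = N then 1 else 0) + (if j = 0 then 1 else 0) + (if j \<in> {1..N-1} then g j else 0)" for j
    unfolding G_def H_def by (rule coeffH)
  have G0: "G 0 = 1" using Gf[of 0] N2 by simp
  have GN: "G N = 1" using Gf[of N] N2 by simp
  have Gm: "j \<in> {1..N-1} \<Longrightarrow> G j = g j" for j using Gf[of j] N2 by auto
  have Gb: "j > N \<Longrightarrow> G j = 0" for j using Gf[of j] N2 by auto
  have grng: "j \<in> {1..N-1} \<Longrightarrow> u < G j \<and> G j < v" for j using Gm assms(12) unfolding N_def by auto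
  have g1: "u < G 1 \<and> G 1 < v" using grng[of 1] N2 by simp
  have r1e: "(beta_T \<beta> ^^ 1) 1 = \<beta> - of_int \<lfloor>\<beta>\<rfloor>" by (simp add: beta_T_def)
  have ib1: "1/\<beta> < u/2" using assms(10) assms(1) bpos by (simp add: field_simps)
  have ib2: "1/\<beta> < 1 - v" using assms(10) assms(3) bpos by (simp add: field_simps)
  have ib3: "1/\<beta> < 1" using assms(5) by simp
  have ibp: "0 < 1/\<beta>" using bpos by simp
  have bs: "\<beta> = s - 1/\<beta>" unfolding s_def by simp

  have sym: "k \<le> N \<Longrightarrow> G k = G (N - k)" for k
  proof (induction k rule: less_induct)
    case (less k)
    show ?case
    proof (cases "k = 0 \<or> k = N")
      case True then show ?thesis using G0 GN by auto
    next
      case False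
      then have k1: "k \<in> {1..N-1}" and k2: "N - k \<in> {1..N-1}" using less.prems by auto
      have "\<exists>m. real_of_int m = G k - G (N - k)"
      proof (cases "k = 1")
        case True
        have "real_of_int (coeff f (Suc (Suc (N-1)))) = G (N-1) - s * G (Suc (N-1)) + G (Suc (Suc (N-1)))"
          by (rule cSS)
        then have "real_of_int (coeff f (N+1)) = G (N-1) - s"
          using N2 GN Gb[of "N+1"] by (simp add: Suc_diff_1)
        then have "real_of_int (coeff f 1 - coeff f (N+1)) = G k - G (N - k)"
          using c1 G0 True by simp
        then show ?thesis by blast
      next
        case False
        then have kk: "k \<ge> 2" using k1 by auto
        have e1: "real_of_int (coeff f k) = G (k-2) - s * G (k-1) + G k"
          using cSS[of "k-2"] kk by (simp add: numeral_2_eq_2 Suc_diff_Suc)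
        have e2: "real_of_int (coeff f (N + 2 - k)) = G (N - k) - s * G (N + 1 - k) + G (N + 2 - k)"
          using cSS[of "N-k"] kk less.prems by (simp add: numeral_2_eq_2 Suc_diff_le)
        have i1: "G (k-2) = G (N + 2 - k)" using less.IH[of "k-2"] kk less.prems
          by (simp add: numeral_2_eq_2)
        have i2: "G (k-1) = G (N + 1 - k)" using less.IH[of "k-1"] kk less.prems by simp
        have "real_of_int (coeff f k - coeff f (N + 2 - k)) = G k - G (N - k)"
          using e1 e2 i1 i2 by simp
        then show ?thesis by blast
      qed
      then obtain m where m: "real_of_int m = G k - G (N - k)" by blast
      have "\<bar>G k - G (N - k)\<bar> < 1" using grng[OF k1] grng[OF k2] assms(1,3) by auto
      then show ?thesis using int_small[OF m] by simp
    qed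
  qed

  have refl: "reflect_poly f = f"
  proof (rule poly_eqI)
    fix j
    have half: "real_of_int (coeff f i) = real_of_int (coeff f (N + 2 - i))" if hj: "i \<le> 1 \<or> (2 \<le> i \<and> i \<le> N)" for i
    proof -
      consider "i = 0" | "i = 1" | "2 \<le> i \<and> i \<le> N" using hj by fastforce
      then show ?thesis
      proof cases
        case 1
        have "real_of_int (coeff f (Suc (Suc N))) = 1" using cSS[of N] GN Gb[of "Suc N"] Gb[of "Suc (Suc N)"] by simp
        then show ?thesis using 1 c0 G0 by simp
      next
        case 2
        have "real_of_int (coeff f (Suc (Suc (N-1)))) = G (N-1) - s * G (Suc (N-1)) + G (Suc (Suc (N-1)))"
          by (rule cSS)
        then have "real_of_int (coeff f (N+1)) = G (N-1) - s"
          using N2 GN Gb[of "N+1"] by (simp add: Suc_diff_1)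
        moreover have "G 1 = G (N - 1)" using sym[of 1] N2 by simp
        ultimately show ?thesis using 2 c1 G0 by simp
      next
        case 3
        have e1: "real_of_int (coeff f i) = G (i-2) - s * G (i-1) + G i"
          using cSS[of "i-2"] 3 by (simp add: numeral_2_eq_2 Suc_diff_Suc)
        have e2: "real_of_int (coeff f (N + 2 - i)) = G (N - i) - s * G (N + 1 - i) + G (N + 2 - i)"
          using cSS[of "N-i"] 3 by (simp add: numeral_2_eq_2 Suc_diff_le)
        have "i - 2 \<le> N" using 3 by linarith
        then have "G (i-2) = G (N - (i-2))" by (rule sym)
        moreover have "N - (i-2) = N + 2 - i" using 3 by simp
        ultimately have "G (i-2) = G (N + 2 - i)" by simp
        moreover have "G (i-1) = G (N + 1 - i)"
        proof -
          have "i - 1 \<le> N" using 3 by linarith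
          then have "G (i-1) = G (N - (i-1))" by (rule sym)
          moreover have "N - (i-1) = N + 1 - i" using 3 by linarith
          ultimately show ?thesis by simp
        qed
        moreover have "G i = G (N - i)" using 3 by (intro sym) linarith
        ultimately show ?thesis using e1 e2 by simp
      qed
    qed
    show "coeff (reflect_poly f) j = coeff f j"
    proof (cases "j > N + 2")
      case True then show ?thesis using assms(7) unfolding N_def by (simp add: coeff_reflect_poly coeff_eq_0)
    next
      case False
      have "real_of_int (coeff f (N + 2 - j)) = real_of_int (coeff f j)"
      proof (cases "j \<le> 1 \<or> (2 \<le> j \<and> j \<le> N)")
        case True then show ?thesis using half[of j] by simp
      next
        case F: False
        then have "N + 2 - j \<le> 1" using False by auto
        then show ?thesis using half[of "N + 2 - j"] False by simp
      qed
      then show ?thesis using False assms(7) unfolding N_def by (simp add: coeff_reflect_poly)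
    qed
  qed

  define r where "r = (\<lambda>k. (beta_T \<beta> ^^ k) 1)"
  have rS: "r (Suc k) = \<beta> * r k - of_int \<lfloor>\<beta> * r k\<rfloor>" for k unfolding r_def by (rule r_Suc)
  have r0: "r 0 = 1" unfolding r_def by simp
  have rlt: "r (Suc k) < 1 \<and> 0 \<le> r (Suc k)" for k using r_range unfolding r_def by blast
  have expl: "1 \<le> k \<Longrightarrow> k \<le> N \<Longrightarrow> r k = G k - G (k-1) / \<beta>" for k
  proof (induction k)
    case 0 then show ?case by simp
  next
    case (Suc k)
    show ?case
    proof (cases "k = 0")
      case True
      have g1: "u < G 1 \<and> G 1 < v" using grng[of 1] N2 by simp
      have "\<beta> * r 0 = of_int (- coeff f 1) + (G 1 - 1/\<beta>)"
        using c1 G0 bs r0 by simp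
      moreover have "0 \<le> G 1 - 1/\<beta>" "G 1 - 1/\<beta> < 1" using g1 ib1 ibp assms(1,3) by linarith+
      ultimately have "\<lfloor>\<beta> * r 0\<rfloor> = - coeff f 1" by (rule floor_decomp)
      then show ?thesis using rS[of 0] c1 G0 bs r0 True by simp
    next
      case False
      have IH: "r k = G k - G (k-1) / \<beta>" using Suc False by simp
      have gk: "u < G k \<and> G k < v" using grng[of k] False Suc.prems by simp
      have gk1: "u < G (Suc k) \<and> G (Suc k) \<le> 1"
      proof (cases "Suc k = N")
        case True then show ?thesis using GN assms(1,2,3) by simp
      next
        case False then show ?thesis using grng[of "Suc k"] Suc.prems assms(3) by force
      qed
      have ck: "real_of_int (coeff f (Suc k)) = G (k-1) - s * G k + G (Suc k)"
        using cSS[of "k-1"] False by (simp add: Suc_diff_1)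
      have "\<beta> * r k = \<beta> * G k - G (k-1)" using IH bpos by (simp add: field_simps)
      also have "\<dots> = of_int (- coeff f (Suc k)) + (G (Suc k) - G k / \<beta>)"
        using ck bpos unfolding s_def by (simp add: field_simps)
      finally have eq: "\<beta> * r k = of_int (- coeff f (Suc k)) + (G (Suc k) - G k / \<beta>)" .
      have "G k / \<beta> < v / \<beta>" using gk bpos by (simp add: divide_strict_right_mono)
      moreover have "v / \<beta> < 1 / \<beta>" using assms(3) bpos by (simp add: divide_strict_right_mono)
      moreover have "0 < G k / \<beta>" using gk assms(1) bpos by simp
      ultimately have "0 \<le> G (Suc k) - G k / \<beta>" "G (Suc k) - G k / \<beta> < 1"
        using gk1 ib1 assms(1) by auto
      then have "\<lfloor>\<beta> * r k\<rfloor> = - coeff f (Suc k)" using floor_decomp[OF eq] by simp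
      then show ?thesis using rS[of k] eq by simp
    qed
  qed
  have rN: "r N = 1 - G (N-1) / \<beta>" using expl[of N] N2 GN by simp
  have gN1: "u < G (N-1) \<and> G (N-1) < v" using grng[of "N-1"] N2 by simp
  have rN1: "r (Suc N) = 1 - 1/\<beta>"
  proof -
    have "real_of_int (coeff f (Suc (Suc (N-1)))) = G (N-1) - s * G (Suc (N-1)) + G (Suc (Suc (N-1)))"
      by (rule cSS)
    then have cN: "real_of_int (coeff f (Suc N)) = G (N-1) - s"
      using N2 GN Gb[of "N+1"] by (simp add: Suc_diff_1)
    have eq: "\<beta> * r N = of_int (- coeff f (Suc N) - 1) + (1 - 1/\<beta>)"
    proof -
      have a: "\<beta> * r N = \<beta> - G (N-1)" using rN bpos by (simp add: field_simps)
      show ?thesis using a cN unfolding s_def by simp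
    qed
    have "\<lfloor>\<beta> * r N\<rfloor> = - coeff f (Suc N) - 1" using floor_decomp[OF eq] ib3 bpos by simp
    then show ?thesis using rS[of N] eq by simp
  qed
  have rN2: "r (Suc (Suc N)) = r 1"
  proof -
    have "\<beta> * r (Suc N) = \<beta> - 1" using rN1 bpos by (simp add: field_simps)
    then have "r (Suc (Suc N)) = (\<beta> - 1) - of_int \<lfloor>\<beta> - 1\<rfloor>" using rS[of "Suc N"] by simp
    also have "\<dots> = \<beta> - of_int \<lfloor>\<beta>\<rfloor>" by simp
    also have "\<dots> = r 1" using rS[of 0] r0 by simp
    finally show ?thesis .
  qed
  have shift: "r a = r b \<Longrightarrow> r (a + j) = r (b + j)" for a b j
    by (induction j) (simp_all add: rS)
  have per: "k \<ge> 1 \<Longrightarrow> r (k + m * (N+1)) = r k" for k m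
  proof (induction m)
    case 0 then show ?case by simp
  next
    case (Suc m)
    have "r (1 + (N+1)) = r 1" using rN2 by simp
    then have "r (1 + (N+1) + (k - 1 + m * (N+1))) = r (1 + (k - 1 + m * (N+1)))" by (rule shift)
    then have "r (k + Suc m * (N+1)) = r (k + m * (N+1))" using Suc.prems by (simp add: algebra_simps)
    then show ?case using Suc by simp
  qed
  have rpos1: "k \<in> {1..N+1} \<Longrightarrow> r k > 0" for k
  proof -
    assume k: "k \<in> {1..N+1}"
    consider "k = 1" | "k \<in> {2..N}" | "k = N + 1" using k by force
    then show ?thesis
    proof cases
      case 1
      have "r 1 = G 1 - 1/\<beta>" using expl[of 1] N2 G0 by simp
      then show ?thesis unfolding 1 using g1 ib1 ibp assms(1) by linarith
    next
      case 2
      have a: "u < G k" using grng[of k] GN 2 assms(2,3) by (cases "k = N") auto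
      have km: "k - 1 \<in> {1..N-1}" using 2 by auto
      have b: "G (k-1) < 1" using grng[OF km] assms(3) by simp
      have "G (k-1) / \<beta> < 1 / \<beta>" using b bpos by (simp add: divide_strict_right_mono)
      moreover have "r k = G k - G (k-1) / \<beta>" using expl[of k] 2 by auto
      ultimately show ?thesis using a ib1 ibp assms(1) by linarith
    next
      case 3 then show ?thesis using rN1 ib3 by simp
    qed
  qed
  have rpos: "\<forall>k\<ge>1. r k > 0"
  proof (intro allI impI)
    fix k :: nat assume k: "k \<ge> 1"
    define j where "j = (k - 1) mod (N+1)"
    have "k = (1 + j) + ((k-1) div (N+1)) * (N+1)" unfolding j_def using k
      by (metis add.commute le_add_diff_inverse mod_div_mult_eq add.left_commute)
    then have "r k = r (1 + j)" using per[of "1+j" "(k-1) div (N+1)"] by simp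
    moreover have "1 + j \<in> {1..N+1}" unfolding j_def by (simp add: less_Suc_eq_le)
    ultimately show "r k > 0" using rpos1 by simp
  qed
  have D: "beta_one \<beta> k = \<lfloor>\<beta> * r k\<rfloor>" for k
    using beta_one_eq[OF bpos] rpos unfolding r_def by blast
  have rng: "\<forall>k. 0 \<le> r k \<and> r k \<le> 1"
  proof
    fix k show "0 \<le> r k \<and> r k \<le> 1" using rlt r0 by (cases k) (auto simp: less_imp_le)
  qed
  have rk: "(beta_T \<beta> ^^ k) (r a) = r (k + a)" for k a unfolding r_def by (simp add: funpow_add)
  have sd: "(\<forall>k. \<lfloor>\<beta> * r (a + k)\<rfloor> = \<lfloor>\<beta> * r (b + k)\<rfloor>) \<Longrightarrow> r a = r b" for a b
    by (rule same_digits[OF assms(5)]) (use rng in \<open>simp_all add: rk add.commute\<close>)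

  have pf: "periodic_from (beta_one \<beta>) 1 (N + 1)"
    unfolding periodic_from_def D using per[of _ 1] by simp
  have m_min: "\<forall>m' p'. periodic_from (beta_one \<beta>) m' p' \<longrightarrow> 1 \<le> m'"
  proof (intro allI impI)
    fix m' p' assume h: "periodic_from (beta_one \<beta>) m' p'"
    show "1 \<le> m'"
    proof (rule ccontr)
      assume "\<not> 1 \<le> m'"
      then have "m' = 0" by simp
      then have "\<forall>k. \<lfloor>\<beta> * r (0 + k)\<rfloor> = \<lfloor>\<beta> * r (p' + k)\<rfloor>" using h
        unfolding periodic_from_def D by (simp add: add.commute)
      then have "r 0 = r p'" by (rule sd)
      moreover have "p' \<ge> 1" using h unfolding periodic_from_def by simp
      then have "r p' < 1" using rlt[of "p' - 1"] by simp
      ultimately show False using r0 by simp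
    qed
  qed
  have p_min: "\<forall>p'. periodic_from (beta_one \<beta>) 1 p' \<longrightarrow> N + 1 \<le> p'"
  proof (intro allI impI)
    fix p' assume h: "periodic_from (beta_one \<beta>) 1 p'"
    have p1: "p' \<ge> 1" using h unfolding periodic_from_def by simp
    have hk: "\<forall>k\<ge>1. \<lfloor>\<beta> * r (k + p')\<rfloor> = \<lfloor>\<beta> * r k\<rfloor>" using h
      unfolding periodic_from_def D by simp
    have "\<forall>k. \<lfloor>\<beta> * r (1 + k)\<rfloor> = \<lfloor>\<beta> * r ((1 + p') + k)\<rfloor>"
    proof
      fix k
      have "\<lfloor>\<beta> * r ((1 + k) + p')\<rfloor> = \<lfloor>\<beta> * r (1 + k)\<rfloor>" using hk[rule_format, of "1 + k"] by simp
      moreover have "(1 + k) + p' = (1 + p') + k" by simp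
      ultimately show "\<lfloor>\<beta> * r (1 + k)\<rfloor> = \<lfloor>\<beta> * r ((1 + p') + k)\<rfloor>" by (simp add: add.commute)
    qed
    then have e: "r 1 = r (1 + p')" by (rule sd)
    show "N + 1 \<le> p'"
    proof (rule ccontr)
      assume "\<not> N + 1 \<le> p'"
      then have pl: "p' \<le> N" by simp
      define i where "i = N + 1 - p'"
      have i: "i \<ge> 1" "i \<le> N" using pl p1 unfolding i_def by auto
      have "r (1 + (i - 1)) = r (1 + p' + (i - 1))" using shift[OF e] .
      then have ri: "r i = r (Suc N)" using i pl unfolding i_def by (simp add: Suc_diff_le)
      show False
      proof (cases "i = N")
        case True
        then show False using ri rN rN1 gN1 assms(3) bpos by (simp add: field_simps)
      next
        case False
        have "r i < 1 - 1/\<beta>"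
        proof (cases "i = 1")
          case True
          have "r 1 = G 1 - 1/\<beta>" using expl[of 1] N2 G0 by simp
          then show ?thesis unfolding True using g1 assms(3) by linarith
        next
          case F: False
          have a: "G i < v" using grng[of i] i False by simp
          have im: "i - 1 \<in> {1..N-1}" using i F False by auto
          have b: "u < G (i-1)" using grng[OF im] by simp
          have "u / \<beta> < G (i-1) / \<beta>" using b bpos by (simp add: divide_strict_right_mono)
          moreover have "(1 - u) / \<beta> < 1 - v"
          proof -
            have "(1 - u) / \<beta> < 1 / \<beta>" using assms(1) bpos by (simp add: divide_strict_right_mono)
            then show ?thesis using ib2 by simp
          qed
          ultimately show ?thesis using expl[of i] i a by (simp add: diff_divide_distrib)
        qed
        then show False using ri rN1 by simp
      qed
    qed
  qed
  show ?thesis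
    using refl pf m_min p_min unfolding mp_periodic_def N_def by simp
qed

end
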